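(* Let $k\ge 2$. For every finite simple graph $G$ admitting a closed neighborhood balanced $k$-coloring and every integer $N\ge 0$, there exist a finite simple graph $G'$ containing $G$ as an induced subgraph, a closed neighborhood balanced $k$-coloring $c'$ of $G'$, and a color $a\in\{1,\dots,k\}$ such that $|c'^{-1}(b)|-|c'^{-1}(a)|\ge N$ for every color $b\neq a$. In particular, there exist graphs with closed neighborhood balanced $k$-colorings having arbitrarily fewer vertices of one color than of each of the other $k-1$ colors.
   Context: For a vertex $v$, $N[v]=\{v\}\cup\{u : uv\in E(G)\}$. A closed neighborhood balanced $k$-coloring of $G$ is a map $c: V(G)\to\{1,\dots,k\}$ such that for every vertex $v$ the numbers $|\{u\in N[v] : c(u)=i\}|$, $i=1,\dots,k$, are all equal. *)

theory Defs
  imports Main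
begin

definition simple_graph :: "'a set \<Rightarrow> 'a set set \<Rightarrow> bool" where
  "simple_graph V E \<longleftrightarrow> finite V \<and>
     (\<forall>e\<in>E. \<exists>u v. u \<noteq> v \<and> u \<in> V \<and> v \<in> V \<and> e = {u, v})"

definition closed_nbhd :: "'a set \<Rightarrow> 'a set set \<Rightarrow> 'a \<Rightarrow> 'a set" where
  "closed_nbhd V E v = insert v {u \<in> V. {u, v} \<in> E}"

definition cnb_coloring :: "nat \<Rightarrow> 'a set \<Rightarrow> 'a set set \<Rightarrow> ('a \<Rightarrow> nat) \<Rightarrow> bool" where
  "cnb_coloring k V E c \<longleftrightarrow> (\<forall>v\<in>V. c v \<in> {1..k}) \<and>
     (\<forall>v\<in>V. \<forall>i\<in>{1..k}. \<forall>j\<in>{1..k}.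
        card {u \<in> closed_nbhd V E v. c u = i} = card {u \<in> closed_nbhd V E v. c u = j})"

definition induced_embedding :: "('a \<Rightarrow> 'b) \<Rightarrow> 'a set \<Rightarrow> 'a set set \<Rightarrow> 'b set \<Rightarrow> 'b set set \<Rightarrow> bool" where
  "induced_embedding f V E V' E' \<longleftrightarrow> inj_on f V \<and> f ` V \<subseteq> V' \<and>
     (\<forall>u\<in>V. \<forall>v\<in>V. {u, v} \<in> E \<longleftrightarrow> {f u, f v} \<in> E')"

end

theory Submission
  imports Defs "HOL-Library.Countable"
begin



definition GV :: "nat \<Rightarrow> nat \<Rightarrow> (nat \<times> nat \<times> nat) set" where
  "GV k m = {(i,l,j). i < m \<and> l \<le> m \<and> ((l = 0 \<and> j = 1) \<or> (1 \<le> l \<and> 2 \<le> j \<and> j \<le> k))}"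

definition GR :: "nat \<times> nat \<times> nat \<Rightarrow> nat \<times> nat \<times> nat \<Rightarrow> bool" where
  "GR x y \<longleftrightarrow> (fst (snd x) = 0 \<and> fst (snd y) = 0) \<or>
     (fst x = fst y \<and> (fst (snd x) = 0 \<or> fst (snd y) = 0 \<or> fst (snd x) = fst (snd y)))"

definition GE :: "nat \<Rightarrow> nat \<Rightarrow> (nat \<times> nat \<times> nat) set set" where
  "GE k m = {{x,y} | x y. x \<in> GV k m \<and> y \<in> GV k m \<and> x \<noteq> y \<and> GR x y}"

definition gc :: "nat \<times> nat \<times> nat \<Rightarrow> nat" where "gc x = snd (snd x)"

lemma GR_sym: "GR x y = GR y x" unfolding GR_def by auto
lemma GR_refl: "GR x x" unfolding GR_def by auto

lemma GE_iff: "{u,v} \<in> GE k m \<longleftrightarrow> u \<noteq> v \<and> GR u v" if "u \<in> GV k m" "v \<in> GV k m"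
proof
  assume "{u,v} \<in> GE k m"
  then obtain x y where xy: "{u,v} = {x,y}" "x \<in> GV k m" "y \<in> GV k m" "x \<noteq> y" "GR x y"
    unfolding GE_def by blast
  from xy(1) have "(u = x \<and> v = y) \<or> (u = y \<and> v = x)" by (auto simp: doubleton_eq_iff)
  thus "u \<noteq> v \<and> GR u v" using xy GR_sym by metis
next
  assume "u \<noteq> v \<and> GR u v"
  thus "{u,v} \<in> GE k m" using that unfolding GE_def by blast
qed

lemma G_simple: "simple_graph (GV k m) (GE k m)"
proof -
  have "GV k m \<subseteq> {..<m} \<times> {..m} \<times> {..Suc k}" unfolding GV_def by auto
  hence "finite (GV k m)" by (rule finite_subset) auto
  thus ?thesis unfolding simple_graph_def GE_def by blast
qed

lemma G_nbhd: "v \<in> GV k m \<Longrightarrow> closed_nbhd (GV k m) (GE k m) v = {u \<in> GV k m. GR u v}"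
  unfolding closed_nbhd_def using GE_iff GR_refl by fastforce

lemma G_count:
  assumes v: "v \<in> GV k m" and b: "b \<in> {1..k}"
  shows "card {u \<in> closed_nbhd (GV k m) (GE k m) v. gc u = b} = (if fst (snd v) = 0 then m else 1)"
proof -
  obtain i l j where vv: "v = (i,l,j)" by (cases v) auto
  have NN: "{u \<in> closed_nbhd (GV k m) (GE k m) v. gc u = b} = {u \<in> GV k m. GR u (i,l,j) \<and> gc u = b}"
    using G_nbhd[OF v] vv by auto
  show ?thesis
  proof (cases "l = 0")
    case True
    with v vv have j: "j = 1" "i < m" unfolding GV_def by auto
    show ?thesis
    proof (cases "b = 1")
      case True
      have "{u \<in> closed_nbhd (GV k m) (GE k m) v. gc u = b} = (\<lambda>i'. (i',0,1)) ` {..<m}"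
        using `l = 0` True j unfolding NN unfolding GV_def GR_def gc_def by auto
      thus ?thesis using `l=0` vv by (simp add: card_image inj_on_def)
    next
      case False
      have "{u \<in> closed_nbhd (GV k m) (GE k m) v. gc u = b} = (\<lambda>l'. (i,l',b)) ` {1..m}"
        using `l = 0` False j b unfolding NN unfolding GV_def GR_def gc_def by auto
      thus ?thesis using `l=0` vv by (simp add: card_image inj_on_def)
    qed
  next
    case False
    with v vv have j: "i < m" "1 \<le> l" "l \<le> m" unfolding GV_def by auto
    show ?thesis
    proof (cases "b = 1")
      case True
      have "{u \<in> closed_nbhd (GV k m) (GE k m) v. gc u = b} = {(i,0,1)}"
        using `l \<noteq> 0` True j unfolding NN unfolding GV_def GR_def gc_def by auto
      thus ?thesis using `l\<noteq>0` vv by simp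
    next
      case False
      have "{u \<in> closed_nbhd (GV k m) (GE k m) v. gc u = b} = {(i,l,b)}"
        using `l \<noteq> 0` False j b unfolding NN unfolding GV_def GR_def gc_def by auto
      thus ?thesis using `l\<noteq>0` vv by simp
    qed
  qed
qed

lemma G_cnb: assumes "1 \<le> k" shows "cnb_coloring k (GV k m) (GE k m) gc"
  unfolding cnb_coloring_def
proof (intro conjI ballI)
  fix v assume "v \<in> GV k m" thus "gc v \<in> {1..k}" using assms by (auto simp: GV_def gc_def)
next
  fix v i j assume "v \<in> GV k m" "i \<in> {1..k}" "j \<in> {1..k}"
  thus "card {u \<in> closed_nbhd (GV k m) (GE k m) v. gc u = i} = card {u \<in> closed_nbhd (GV k m) (GE k m) v. gc u = j}"
    using G_count by simp
qed

lemma G_tot1: "card {v \<in> GV k m. gc v = 1} = m"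
proof -
  have "{v \<in> GV k m. gc v = 1} = (\<lambda>i. (i,0,1)) ` {..<m}" unfolding GV_def gc_def by auto
  thus ?thesis by (simp add: card_image inj_on_def)
qed

lemma G_totb: assumes "2 \<le> b" "b \<le> k" shows "card {v \<in> GV k m. gc v = b} = m * m"
proof -
  have "{v \<in> GV k m. gc v = b} = (\<lambda>(i,l). (i,l,b)) ` ({..<m} \<times> {1..m})"
    using assms unfolding GV_def gc_def by (force simp: image_iff)
  moreover have "inj_on (\<lambda>(i,l). (i,l,b)) ({..<m} \<times> {1..m})" by (auto simp: inj_on_def)
  ultimately show ?thesis by (simp add: card_image card_cartesian_product)
qed


lemma simple_sub: "simple_graph V E \<Longrightarrow> e \<in> E \<Longrightarrow> e \<subseteq> V"
  unfolding simple_graph_def by fastforce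

lemma cnbD:
  assumes "cnb_coloring k V E c" "v \<in> V" "i \<in> {1..k}" "j \<in> {1..k}"
  shows "card {u \<in> closed_nbhd V E v. c u = i} = card {u \<in> closed_nbhd V E v. c u = j}"
proof -
  have "\<forall>v\<in>V. \<forall>i\<in>{1..k}. \<forall>j\<in>{1..k}.
        card {u \<in> closed_nbhd V E v. c u = i} = card {u \<in> closed_nbhd V E v. c u = j}"
    using assms(1) unfolding cnb_coloring_def by (rule conjunct2)
  from bspec[OF bspec[OF bspec[OF this assms(2)] assms(3)] assms(4)] show ?thesis .
qed

lemma cnbC: assumes "cnb_coloring k V E c" "v \<in> V" shows "c v \<in> {1..k}"
proof -
  have "\<forall>v\<in>V. c v \<in> {1..k}" using assms(1) unfolding cnb_coloring_def by (rule conjunct1)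
  thus ?thesis using assms(2) by (rule bspec)
qed

lemma sgE: assumes "simple_graph V E" "e \<in> E" shows "\<exists>u v. u \<noteq> v \<and> u \<in> V \<and> v \<in> V \<and> e = {u, v}"
proof -
  have "\<forall>e\<in>E. \<exists>u v. u \<noteq> v \<and> u \<in> V \<and> v \<in> V \<and> e = {u, v}"
    using assms(1) unfolding simple_graph_def by (rule conjunct2)
  thus ?thesis using assms(2) by (rule bspec)
qed

lemma img_edge:
  assumes "simple_graph V E" "inj_on f V" "u \<in> V" "v \<in> V"
  shows "{f u, f v} \<in> (`) f ` E \<longleftrightarrow> {u,v} \<in> E"
proof
  assume "{f u, f v} \<in> (`) f ` E"
  then obtain e where e: "e \<in> E" "{f u, f v} = f ` e" by (rule imageE) (rule that)
  have "e \<subseteq> V" using simple_sub[OF assms(1) e(1)] .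
  moreover have "f ` {u,v} = f ` e" using e(2) by (simp only: image_insert image_empty)
  moreover have "{u,v} \<subseteq> V" using assms(3,4) by simp
  ultimately have "{u,v} = e" using inj_on_image_eq_iff[OF assms(2), of "{u,v}" e] by (simp only:)
  thus "{u,v} \<in> E" using e(1) by (simp only:)
next
  assume "{u,v} \<in> E"
  hence "f ` {u,v} \<in> (`) f ` E" by (rule imageI)
  thus "{f u, f v} \<in> (`) f ` E" by (simp only: image_insert image_empty)
qed

lemma nsub: "v \<in> V \<Longrightarrow> closed_nbhd V E v \<subseteq> V"
  unfolding closed_nbhd_def by (intro insert_subsetI) auto

lemma img_graph:
  assumes sg: "simple_graph V E" and cn: "cnb_coloring k V E c" and inj: "inj_on f V"
  defines "c' \<equiv> c \<circ> the_inv_into V f"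
  shows "simple_graph (f ` V) ((`) f ` E)" "cnb_coloring k (f ` V) ((`) f ` E) c'"
    "\<And>b. card {x \<in> f ` V. c' x = b} = card {v \<in> V. c v = b}"
proof -
  show "simple_graph (f ` V) ((`) f ` E)" unfolding simple_graph_def
  proof (intro conjI ballI)
    show "finite (f ` V)" using sg unfolding simple_graph_def by simp
  next
    fix e' assume "e' \<in> (`) f ` E"
    then obtain e where e: "e \<in> E" "e' = f ` e" by blast
    then obtain u v where uv: "u \<noteq> v" "u \<in> V" "v \<in> V" "e = {u,v}" using sgE[OF sg] by metis
    have "f u \<noteq> f v" using uv inj by (meson inj_on_contraD)
    moreover have "e' = {f u, f v}" using uv e by simp
    ultimately show "\<exists>u v. u \<noteq> v \<and> u \<in> f ` V \<and> v \<in> f ` V \<and> e' = {u, v}" using uv by blast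
  qed
  have c': "\<And>v. v \<in> V \<Longrightarrow> c' (f v) = c v" unfolding c'_def using the_inv_into_f_f[OF inj] by simp
  have nb: "closed_nbhd (f ` V) ((`) f ` E) (f v) = f ` closed_nbhd V E v" if "v \<in> V" for v
  proof -
    have "{x \<in> f ` V. {x, f v} \<in> (`) f ` E} = f ` {u \<in> V. {u, v} \<in> E}"
    proof (rule set_eqI, rule iffI)
      fix x assume "x \<in> {x \<in> f ` V. {x, f v} \<in> (`) f ` E}"
      then obtain u where u: "u \<in> V" "x = f u" "{f u, f v} \<in> (`) f ` E" by blast
      thus "x \<in> f ` {u \<in> V. {u, v} \<in> E}" using img_edge[OF sg inj u(1) that] by blast
    next
      fix x assume "x \<in> f ` {u \<in> V. {u, v} \<in> E}"
      then obtain u where u: "u \<in> V" "x = f u" "{u, v} \<in> E" by blast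
      thus "x \<in> {x \<in> f ` V. {x, f v} \<in> (`) f ` E}" using img_edge[OF sg inj u(1) that] by blast
    qed
    thus ?thesis unfolding closed_nbhd_def by simp
  qed
  have cnt: "{x \<in> f ` A. c' x = b} = f ` {v \<in> A. c v = b}" if "A \<subseteq> V" for A b
  proof (rule set_eqI, rule iffI)
    fix x assume "x \<in> {x \<in> f ` A. c' x = b}"
    then obtain v where v: "v \<in> A" "x = f v" "c' x = b" by blast
    have "v \<in> V" using v(1) that by blast
    hence "c' (f v) = c v" by (rule c')
    hence "c v = b" using v(2,3) by simp
    thus "x \<in> f ` {v \<in> A. c v = b}" using v by blast
  next
    fix x assume "x \<in> f ` {v \<in> A. c v = b}"
    then obtain v where v: "v \<in> A" "x = f v" "c v = b" by blast
    have "v \<in> V" using v(1) that by blast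
    hence "c' (f v) = c v" by (rule c')
    hence "c' x = b" using v(2,3) by simp
    thus "x \<in> {x \<in> f ` A. c' x = b}" using v by blast
  qed
  have cc: "card {x \<in> f ` A. c' x = b} = card {v \<in> A. c v = b}" if "A \<subseteq> V" for A b
  proof -
    have "{v \<in> A. c v = b} \<subseteq> V" using that by auto
    from inj_on_subset[OF inj this] have "inj_on f {v \<in> A. c v = b}" .
    thus ?thesis unfolding cnt[OF that] by (rule card_image)
  qed
  show "cnb_coloring k (f ` V) ((`) f ` E) c'" unfolding cnb_coloring_def
  proof (intro conjI ballI)
    fix x assume "x \<in> f ` V"
    then obtain v where "v \<in> V" "x = f v" by blast
    thus "c' x \<in> {1..k}" using cnbC[OF cn] c' by simp
  next
    fix x i j assume x: "x \<in> f ` V" and ij: "i \<in> {1..k}" "j \<in> {1..k}"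
    then obtain v where v: "v \<in> V" "x = f v" by blast
    show "card {u \<in> closed_nbhd (f ` V) ((`) f ` E) x. c' u = i} = card {u \<in> closed_nbhd (f ` V) ((`) f ` E) x. c' u = j}"
      unfolding v(2) nb[OF v(1)] cc[OF nsub[OF v(1)]] by (rule cnbD[OF cn v(1) ij])
  qed
  show "\<And>b. card {x \<in> f ` V. c' x = b} = card {v \<in> V. c v = b}" using cc[OF order_refl] .
qed

lemma union_nb:
  assumes d: "V1 \<inter> V2 = {}" and s1: "simple_graph V1 E1" and s2: "simple_graph V2 E2" and v: "v \<in> V1"
  shows "closed_nbhd (V1 \<union> V2) (E1 \<union> E2) v = closed_nbhd V1 E1 v"
proof -
  have "{u \<in> V1 \<union> V2. {u, v} \<in> E1 \<union> E2} = {u \<in> V1. {u, v} \<in> E1}"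
  proof (rule set_eqI, rule iffI)
    fix u assume u: "u \<in> {u \<in> V1 \<union> V2. {u, v} \<in> E1 \<union> E2}"
    have "{u, v} \<notin> E2"
    proof
      assume "{u, v} \<in> E2"
      hence "v \<in> V2" using simple_sub[OF s2] by (meson insert_subset subset_insertI)
      thus False using v d by (simp add: disjoint_iff)
    qed
    hence "{u, v} \<in> E1" using u by simp
    moreover hence "u \<in> V1" using simple_sub[OF s1] by (meson insert_subset)
    ultimately show "u \<in> {u \<in> V1. {u, v} \<in> E1}" by simp
  next
    fix u assume "u \<in> {u \<in> V1. {u, v} \<in> E1}"
    thus "u \<in> {u \<in> V1 \<union> V2. {u, v} \<in> E1 \<union> E2}" by simp
  qed
  thus ?thesis unfolding closed_nbhd_def by simp
qed

lemma union_graph: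
  assumes d: "V1 \<inter> V2 = {}" and s1: "simple_graph V1 E1" and s2: "simple_graph V2 E2"
    and c1: "cnb_coloring k V1 E1 f1" and c2: "cnb_coloring k V2 E2 f2"
  shows "simple_graph (V1 \<union> V2) (E1 \<union> E2)"
    "cnb_coloring k (V1 \<union> V2) (E1 \<union> E2) (\<lambda>x. if x \<in> V1 then f1 x else f2 x)"
    "\<And>b. card {x \<in> V1 \<union> V2. (if x \<in> V1 then f1 x else f2 x) = b} = card {x \<in> V1. f1 x = b} + card {x \<in> V2. f2 x = b}"
proof -
  let ?c = "\<lambda>x. if x \<in> V1 then f1 x else f2 x"
  have fin1: "finite V1" using s1 unfolding simple_graph_def by (rule conjunct1)
  have fin2: "finite V2" using s2 unfolding simple_graph_def by (rule conjunct1)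
  show "simple_graph (V1 \<union> V2) (E1 \<union> E2)" unfolding simple_graph_def
  proof (intro conjI ballI)
    show "finite (V1 \<union> V2)" using fin1 fin2 by (rule finite_UnI)
  next
    fix e assume "e \<in> E1 \<union> E2"
    thus "\<exists>u v. u \<noteq> v \<and> u \<in> V1 \<union> V2 \<and> v \<in> V1 \<union> V2 \<and> e = {u, v}"
    proof
      assume "e \<in> E1"
      from sgE[OF s1 this] obtain u v where "u \<noteq> v" "u \<in> V1" "v \<in> V1" "e = {u, v}" by (elim exE conjE)
      thus ?thesis by (intro exI[of _ u] exI[of _ v]) simp
    next
      assume "e \<in> E2"
      from sgE[OF s2 this] obtain u v where "u \<noteq> v" "u \<in> V2" "v \<in> V2" "e = {u, v}" by (elim exE conjE)
      thus ?thesis by (intro exI[of _ u] exI[of _ v]) simp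
    qed
  qed
  have e1: "{u \<in> A. ?c u = b} = {u \<in> A. f1 u = b}" if "A \<subseteq> V1" for A b
    using that by (intro Collect_cong conj_cong refl) (simp add: subset_iff)
  have e2: "{u \<in> A. ?c u = b} = {u \<in> A. f2 u = b}" if "A \<subseteq> V2" for A b
  proof (intro Collect_cong conj_cong refl)
    fix u assume "u \<in> A"
    hence "u \<notin> V1" using that d by (auto simp: subset_iff disjoint_iff)
    thus "(?c u = b) = (f2 u = b)" by simp
  qed
  show "cnb_coloring k (V1 \<union> V2) (E1 \<union> E2) ?c" unfolding cnb_coloring_def
  proof (intro conjI ballI)
    fix x assume "x \<in> V1 \<union> V2" thus "?c x \<in> {1..k}" using cnbC[OF c1] cnbC[OF c2] by (cases "x \<in> V1") simp_all
  next
    fix x i j assume x: "x \<in> V1 \<union> V2" and ij: "i \<in> {1..k}" "j \<in> {1..k}"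
    show "card {u \<in> closed_nbhd (V1 \<union> V2) (E1 \<union> E2) x. ?c u = i} = card {u \<in> closed_nbhd (V1 \<union> V2) (E1 \<union> E2) x. ?c u = j}"
    proof (cases "x \<in> V1")
      case True thus ?thesis unfolding union_nb[OF d s1 s2 True] e1[OF nsub[OF True]] by (rule cnbD[OF c1 _ ij])
    next
      case False hence F: "x \<in> V2" using x by simp
      have d': "V2 \<inter> V1 = {}" using d by (simp add: Int_commute)
      have "closed_nbhd (V1 \<union> V2) (E1 \<union> E2) x = closed_nbhd (V2 \<union> V1) (E2 \<union> E1) x" by (simp add: Un_commute)
      also have "\<dots> = closed_nbhd V2 E2 x" by (rule union_nb[OF d' s2 s1 F])
      finally have N2: "closed_nbhd (V1 \<union> V2) (E1 \<union> E2) x = closed_nbhd V2 E2 x" .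
      show ?thesis unfolding N2 e2[OF nsub[OF F]] by (rule cnbD[OF c2 F ij])
    qed
  qed
  fix b
  have U: "{x \<in> V1 \<union> V2. ?c x = b} = {x \<in> V1. ?c x = b} \<union> {x \<in> V2. ?c x = b}" by auto
  have D: "{x \<in> V1. ?c x = b} \<inter> {x \<in> V2. ?c x = b} = {}" using d by auto
  have "card {x \<in> V1 \<union> V2. ?c x = b} = card {x \<in> V1. ?c x = b} + card {x \<in> V2. ?c x = b}"
    unfolding U by (rule card_Un_disjoint) (use fin1 fin2 D in auto)
  thus "card {x \<in> V1 \<union> V2. ?c x = b} = card {x \<in> V1. f1 x = b} + card {x \<in> V2. f2 x = b}"
    unfolding e1[OF order_refl] e2[OF order_refl] .
qed

lemma sq_bound: "int (m*m) - int m \<ge> int m - 1"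
proof -
  have "int (m*m) - int m - (int m - 1) = (int m - 1)^2" by (simp add: power2_eq_square algebra_simps)
  thus ?thesis by (smt (verit) zero_le_power2)
qed

theorem corollary2p14:
  fixes k :: nat
  assumes "k \<ge> 2"
  shows "(\<forall>(V :: 'a set) E c (N :: int). simple_graph V E \<and> cnb_coloring k V E c \<and> N \<ge> 0 \<longrightarrow>
            (\<exists>(V' :: ('a + nat) set) E' f c' a.
               simple_graph V' E' \<and> induced_embedding f V E V' E' \<and> cnb_coloring k V' E' c' \<and>
               a \<in> {1..k} \<and>
               (\<forall>b\<in>{1..k}. b \<noteq> a \<longrightarrow>
                  int (card {v \<in> V'. c' v = b}) - int (card {v \<in> V'. c' v = a}) \<ge> N)))
       \<and> (\<forall>N :: int. \<exists>(V :: nat set) E c a.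
            simple_graph V E \<and> cnb_coloring k V E c \<and> a \<in> {1..k} \<and>
            (\<forall>b\<in>{1..k}. b \<noteq> a \<longrightarrow>
               int (card {v \<in> V. c v = b}) - int (card {v \<in> V. c v = a}) \<ge> N))"
proof (intro conjI allI impI)
  have k1: "1 \<le> k" using assms by simp
  fix N :: int
  define m where "m = nat N + 1"
  have injn: "inj_on (to_nat :: nat \<times> nat \<times> nat \<Rightarrow> nat) (GV k m)" by (simp add: inj_on_def)
  note I = img_graph[OF G_simple G_cnb[OF k1] injn]
  show "\<exists>(V :: nat set) E c a.
            simple_graph V E \<and> cnb_coloring k V E c \<and> a \<in> {1..k} \<and>
            (\<forall>b\<in>{1..k}. b \<noteq> a \<longrightarrow>
               int (card {v \<in> V. c v = b}) - int (card {v \<in> V. c v = a}) \<ge> N)"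
  proof (intro exI conjI ballI impI)
    show "simple_graph (to_nat ` GV k m) ((`) to_nat ` GE k m)" by (rule I(1))
    show "cnb_coloring k (to_nat ` GV k m) ((`) to_nat ` GE k m) (gc \<circ> the_inv_into (GV k m) to_nat)" by (rule I(2))
    show "(1::nat) \<in> {1..k}" using k1 by simp
    fix b assume "b \<in> {1..k}" "b \<noteq> 1"
    hence b: "2 \<le> b" "b \<le> k" by auto
    show "N \<le> int (card {v \<in> to_nat ` GV k m. (gc \<circ> the_inv_into (GV k m) to_nat) v = b}) -
             int (card {v \<in> to_nat ` GV k m. (gc \<circ> the_inv_into (GV k m) to_nat) v = 1})"
      unfolding I(3) G_tot1 G_totb[OF b] using sq_bound[of m] unfolding m_def by linarith
  qed
next
  have k1: "1 \<le> k" using assms by simp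
  fix V :: "'a set" and E c and N :: int
  assume H: "simple_graph V E \<and> cnb_coloring k V E c \<and> 0 \<le> N"
  hence sg: "simple_graph V E" and cn: "cnb_coloring k V E c" and N0: "0 \<le> N" by auto
  define m where "m = nat N + card V + 1"
  define g :: "nat \<times> nat \<times> nat \<Rightarrow> 'a + nat" where "g = Inr \<circ> to_nat"
  have injg: "inj_on g (GV k m)" unfolding g_def by (simp add: inj_on_def)
  have injl: "inj_on (Inl :: 'a \<Rightarrow> 'a + nat) V" by simp
  note I2 = img_graph[OF G_simple G_cnb[OF k1] injg]
  note I1 = img_graph[OF sg cn injl]
  have dj: "Inl ` V \<inter> g ` GV k m = {}" unfolding g_def by auto
  note U = union_graph[OF dj I1(1) I2(1) I1(2) I2(2)]
  let ?c = "\<lambda>x. if x \<in> Inl ` V then (c \<circ> the_inv_into V Inl) x else (gc \<circ> the_inv_into (GV k m) g) x"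
  have fin: "finite V" using sg unfolding simple_graph_def by simp
  show "\<exists>(V' :: ('a + nat) set) E' f c' a.
               simple_graph V' E' \<and> induced_embedding f V E V' E' \<and> cnb_coloring k V' E' c' \<and>
               a \<in> {1..k} \<and>
               (\<forall>b\<in>{1..k}. b \<noteq> a \<longrightarrow>
                  int (card {v \<in> V'. c' v = b}) - int (card {v \<in> V'. c' v = a}) \<ge> N)"
  proof (intro exI conjI ballI impI)
    show "simple_graph (Inl ` V \<union> g ` GV k m) ((`) Inl ` E \<union> (`) g ` GE k m)" by (rule U(1))
    show "cnb_coloring k (Inl ` V \<union> g ` GV k m) ((`) Inl ` E \<union> (`) g ` GE k m) ?c" by (rule U(2))
    show "(1::nat) \<in> {1..k}" using k1 by simp
    show "induced_embedding Inl V E (Inl ` V \<union> g ` GV k m) ((`) Inl ` E \<union> (`) g ` GE k m)"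
      unfolding induced_embedding_def
    proof (intro conjI ballI)
      show "inj_on Inl V" by simp
      show "Inl ` V \<subseteq> Inl ` V \<union> g ` GV k m" by blast
      fix u v assume uv: "u \<in> V" "v \<in> V"
      have "{Inl u, Inl v} \<notin> (`) g ` GE k m" unfolding g_def by auto
      thus "({u, v} \<in> E) = ({Inl u, Inl v} \<in> (`) Inl ` E \<union> (`) g ` GE k m)"
        using img_edge[OF sg injl uv] by blast
    qed
    fix b assume "b \<in> {1..k}" "b \<noteq> 1"
    hence b: "2 \<le> b" "b \<le> k" by auto
    have A: "int (card {v \<in> V. c v = 1}) \<le> int (card V)" using fin by (intro of_nat_mono card_mono) auto
    have B: "int (m*m) - int m \<ge> int m - 1" by (rule sq_bound)
    have C: "int m - 1 = N + int (card V)" unfolding m_def using N0 by simp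
    have E1: "card {x \<in> Inl ` V \<union> g ` GV k m. ?c x = b} = card {v \<in> V. c v = b} + m * m"
      unfolding U(3) I1(3) I2(3) G_totb[OF b] ..
    have E2: "card {x \<in> Inl ` V \<union> g ` GV k m. ?c x = 1} = card {v \<in> V. c v = 1} + m"
      unfolding U(3) I1(3) I2(3) G_tot1 ..
    show "N \<le> int (card {x \<in> Inl ` V \<union> g ` GV k m. ?c x = b}) - int (card {x \<in> Inl ` V \<union> g ` GV k m. ?c x = 1})"
      unfolding E1 E2 of_nat_add using A B C by linarith
  qed
qed

end
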